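(* Let $\mathrm{M}=\langle e_1+I,\ e_2+I,\ A\rangle$, where $e_1,e_2$ are the standard basis vectors of $E^2$ and $A=\mathrm{diag}(1,-1)$. Then $$N_A(\mathrm{M})=\{b+B : 2b_2\in\mathbb Z \text{ and } B\in\langle -I, A\rangle\},$$ where $b=(b_1,b_2)$.
   Context: Affine maps of $E^2$ are written $b+B$ (meaning $x\mapsto b+Bx$, $b\in E^2$, $B\in\mathrm{GL}(2,\mathbb R)$); $b+I$ is translation by $b$. $N_A(\mathrm{M})$ denotes the normalizer of $\mathrm{M}$ in the group of affine transformations of $E^2$. (Here $E^2/\mathrm{M}$ is an annulus.) *)

theory Defs
  imports "HOL-Analysis.Analysis"
begin

text \<open>Affine maps of E^2 (modelled as real^2): b + B means x \<mapsto> b + B x.\<close>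
definition aff :: "real^2 \<Rightarrow> real^2^2 \<Rightarrow> (real^2 \<Rightarrow> real^2)" where
  "aff b B = (\<lambda>x. b + B *v x)"

definition Aff2 :: "(real^2 \<Rightarrow> real^2) set" where
  "Aff2 = {aff b B | b B. invertible B}"

inductive_set gen_maps :: "(real^2 \<Rightarrow> real^2) set \<Rightarrow> (real^2 \<Rightarrow> real^2) set"
  for S where
  gen_id: "id \<in> gen_maps S"
| gen_base: "g \<in> S \<Longrightarrow> g \<in> gen_maps S"
| gen_comp: "g \<in> gen_maps S \<Longrightarrow> h \<in> gen_maps S \<Longrightarrow> g \<circ> h \<in> gen_maps S"
| gen_inv: "g \<in> gen_maps S \<Longrightarrow> inv g \<in> gen_maps S"

inductive_set gen_mats :: "(real^2^2) set \<Rightarrow> (real^2^2) set"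
  for S where
  genm_id: "mat 1 \<in> gen_mats S"
| genm_base: "B \<in> S \<Longrightarrow> B \<in> gen_mats S"
| genm_mult: "B \<in> gen_mats S \<Longrightarrow> C \<in> gen_mats S \<Longrightarrow> B ** C \<in> gen_mats S"
| genm_inv: "B \<in> gen_mats S \<Longrightarrow> matrix_inv B \<in> gen_mats S"

definition affine_normalizer :: "(real^2 \<Rightarrow> real^2) set \<Rightarrow> (real^2 \<Rightarrow> real^2) set" where
  "affine_normalizer G = {g \<in> Aff2. (\<lambda>m. g \<circ> m \<circ> inv g) ` G = G}"

definition e1 :: "real^2" where "e1 = axis 1 1"
definition e2 :: "real^2" where "e2 = axis 2 1"

definition Amat :: "real^2^2" where
  "Amat = (\<chi> i j. if i = j then (if i = 1 then 1 else -1) else 0)"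

definition Mgrp :: "(real^2 \<Rightarrow> real^2) set" where
  "Mgrp = gen_maps {aff e1 (mat 1), aff e2 (mat 1), aff 0 Amat}"

end

theory Submission imports Defs begin

definition dg :: "real \<Rightarrow> real \<Rightarrow> real \<Rightarrow> real \<Rightarrow> real^2 \<Rightarrow> real^2" where
  "dg p q c d = (\<lambda>x. \<chi> i. if i = 1 then p * x$1 + c else q * x$2 + d)"

lemma dg_1 [simp]: "dg p q c d x $ 1 = p * x$1 + c"
  by (simp add: dg_def)
lemma dg_2 [simp]: "dg p q c d x $ 2 = q * x$2 + d"
  by (simp add: dg_def)

lemma aff_1 [simp]: "aff b B x $ 1 = b$1 + B$1$1 * x$1 + B$1$2 * x$2"
  by (simp add: aff_def matrix_vector_mult_def sum_2)
lemma aff_2 [simp]: "aff b B x $ 2 = b$2 + B$2$1 * x$1 + B$2$2 * x$2"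
  by (simp add: aff_def matrix_vector_mult_def sum_2)

lemma fun_eq2: "(f::real^2\<Rightarrow>real^2) = g \<longleftrightarrow> (\<forall>x. f x $ 1 = g x $ 1 \<and> f x $ 2 = g x $ 2)"
  by (auto simp: fun_eq_iff vec_eq_iff forall_2)

lemma dg_comp: "dg p q c d \<circ> dg p' q' c' d' = dg (p*p') (q*q') (p*c'+c) (q*d'+d)"
  by (simp add: fun_eq2 algebra_simps)

lemma dg_id: "dg 1 1 0 0 = id"
  by (simp add: fun_eq2)

lemma dg_inv: assumes "p = 1 \<or> p = -1" "q = 1 \<or> q = -1"
  shows "inv (dg p q c d) = dg p q (-p*c) (-q*d)"
  apply (rule inv_unique_comp) using assms by (auto simp: dg_comp dg_id[symmetric])

lemma aff_diag: "B$1$2 = 0 \<Longrightarrow> B$2$1 = 0 \<Longrightarrow> aff b B = dg (B$1$1) (B$2$2) (b$1) (b$2)"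
  by (simp add: fun_eq2)

lemma e_simps [simp]: "e1$1 = 1" "e1$2 = 0" "e2$1 = 0" "e2$2 = 1"
  by (simp_all add: e1_def e2_def axis_def)

lemma Amat_simps [simp]: "Amat$1$1 = 1" "Amat$1$2 = 0" "Amat$2$1 = 0" "Amat$2$2 = -1"
  by (simp_all add: Amat_def)

lemma gens: "aff e1 (mat 1) = dg 1 1 1 0" "aff e2 (mat 1) = dg 1 1 0 1" "aff 0 Amat = dg 1 (-1) 0 0"
  by (simp_all add: fun_eq2 mat_def)

definition Mset :: "(real^2 \<Rightarrow> real^2) set" where
  "Mset = {dg 1 s m n | s m n. (s = 1 \<or> s = -1) \<and> m \<in> \<int> \<and> n \<in> \<int>}"

lemma Mgrp_sub: "Mgrp \<subseteq> Mset"
proof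
  fix f assume "f \<in> Mgrp"
  then show "f \<in> Mset" unfolding Mgrp_def
  proof (induction rule: gen_maps.induct)
    case gen_id
    then show ?case unfolding Mset_def dg_id[symmetric] by force
  next
    case (gen_base g)
    then show ?case unfolding Mset_def gens by force
  next
    case (gen_comp g h)
    then obtain s m n s2 m2 n2 where "g = dg 1 s m n" and gc1: "(s = 1 \<or> s = -1) \<and> m \<in> \<int> \<and> n \<in> \<int>"
      "h = dg 1 s2 m2 n2" and gc: "(s2 = 1 \<or> s2 = -1) \<and> m2 \<in> \<int> \<and> n2 \<in> \<int>"
      unfolding Mset_def by blast
    then have "g \<circ> h = dg 1 (s * s2) (m2+m) (s * n2 + n)" by (simp add: dg_comp)
    moreover have "(s * s2 = 1 \<or> s * s2 = -1) \<and> m2+m \<in> \<int> \<and> s * n2 + n \<in> \<int>"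
      using gc gc1 by auto
    ultimately show ?case unfolding Mset_def by blast
  next
    case (gen_inv g)
    then obtain s m n where "g = dg 1 s m n" and gc: "(s = 1 \<or> s = -1) \<and> m \<in> \<int> \<and> n \<in> \<int>"
      unfolding Mset_def by blast
    then have "inv g = dg 1 s (-1 * m) (-s * n)" by (simp add: dg_inv)
    moreover have "-1 * m \<in> \<int> \<and> -s * n \<in> \<int>" using gc by auto
    ultimately show ?case unfolding Mset_def using gc by blast
  qed
qed

lemma trans1_in: "dg 1 1 (of_int k) 0 \<in> Mgrp"
proof -
  have nat: "dg 1 1 (of_nat j) 0 \<in> Mgrp" for j
  proof (induction j)
    case 0 then show ?case unfolding Mgrp_def by (simp add: dg_id, subst id_def[symmetric], rule gen_maps.gen_id)
  next
    case (Suc j)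
    have "dg 1 1 1 0 \<circ> dg 1 1 (of_nat j) 0 \<in> Mgrp" unfolding Mgrp_def
      by (rule gen_maps.gen_comp, rule gen_maps.gen_base, simp add: gens,
          use Suc in \<open>simp add: Mgrp_def\<close>)
    then show ?case by (simp add: dg_comp add.commute)
  qed
  show ?thesis
  proof (cases "k \<ge> 0")
    case True
    then show ?thesis using nat[of "nat k"] by simp
  next
    case False
    have "inv (dg 1 1 (of_nat (nat (-k))) 0) \<in> Mgrp"
      using nat[of "nat (-k)"] unfolding Mgrp_def by (rule gen_maps.gen_inv)
    then show ?thesis using False by (simp add: dg_inv)
  qed
qed

lemma trans2_in: "dg 1 1 0 (of_int k) \<in> Mgrp"
proof -
  have nat: "dg 1 1 0 (of_nat j) \<in> Mgrp" for j
  proof (induction j)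
    case 0 then show ?case unfolding Mgrp_def by (simp add: dg_id, subst id_def[symmetric], rule gen_maps.gen_id)
  next
    case (Suc j)
    have "dg 1 1 0 1 \<circ> dg 1 1 0 (of_nat j) \<in> Mgrp" unfolding Mgrp_def
      by (rule gen_maps.gen_comp, rule gen_maps.gen_base, simp add: gens,
          use Suc in \<open>simp add: Mgrp_def\<close>)
    then show ?case by (simp add: dg_comp add.commute)
  qed
  show ?thesis
  proof (cases "k \<ge> 0")
    case True
    then show ?thesis using nat[of "nat k"] by simp
  next
    case False
    have "inv (dg 1 1 0 (of_nat (nat (-k)))) \<in> Mgrp"
      using nat[of "nat (-k)"] unfolding Mgrp_def by (rule gen_maps.gen_inv)
    then show ?thesis using False by (simp add: dg_inv)
  qed
qed

lemma Mgrp_eq: "Mgrp = Mset"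
proof
  show "Mset \<subseteq> Mgrp"
  proof
    fix f assume "f \<in> Mset"
    then obtain s m n where f: "f = dg 1 s m n" "s = 1 \<or> s = -1" "m \<in> \<int>" "n \<in> \<int>"
      unfolding Mset_def by blast
    obtain k l where kl: "m = of_int k" "n = of_int l" using f Ints_cases by metis
    have T: "dg 1 1 m n \<in> Mgrp"
    proof -
      have "dg 1 1 m 0 \<circ> dg 1 1 0 n \<in> Mgrp" unfolding Mgrp_def
        by (rule gen_maps.gen_comp) (use trans1_in trans2_in kl in \<open>auto simp: Mgrp_def\<close>)
      then show ?thesis by (simp add: dg_comp)
    qed
    show "f \<in> Mgrp"
    proof (cases "s = 1")
      case True then show ?thesis using T f by simp
    next
      case False
      have "dg 1 1 m n \<circ> dg 1 (-1) 0 0 \<in> Mgrp" unfolding Mgrp_def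
        by (rule gen_maps.gen_comp) (use T in \<open>auto simp: Mgrp_def gens[symmetric] intro: gen_maps.gen_base\<close>)
      then show ?thesis using False f by (simp add: dg_comp)
    qed
  qed
qed (rule Mgrp_sub)

definition Dset :: "(real^2^2) set" where
  "Dset = {B. B$1$2 = 0 \<and> B$2$1 = 0 \<and> (B$1$1 = 1 \<or> B$1$1 = -1) \<and> (B$2$2 = 1 \<or> B$2$2 = -1)}"

lemma mm_simps [simp]:
  fixes B C :: "real^2^2"
  shows
  "(B ** C :: real^2^2)$1$1 = B$1$1 * C$1$1 + B$1$2 * C$2$1"
  "(B ** C :: real^2^2)$1$2 = B$1$1 * C$1$2 + B$1$2 * C$2$2"
  "(B ** C :: real^2^2)$2$1 = B$2$1 * C$1$1 + B$2$2 * C$2$1"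
  "(B ** C :: real^2^2)$2$2 = B$2$1 * C$1$2 + B$2$2 * C$2$2"
  by (simp_all add: matrix_matrix_mult_def sum_2)

lemma mat_eq2: "(B::real^2^2) = C \<longleftrightarrow> B$1$1 = C$1$1 \<and> B$1$2 = C$1$2 \<and> B$2$1 = C$2$1 \<and> B$2$2 = C$2$2"
  by (auto simp: vec_eq_iff forall_2)

lemma Dset_sq: "B \<in> Dset \<Longrightarrow> B ** B = mat 1"
  unfolding Dset_def by (auto simp: mat_eq2 mat_def)

lemma Dset_inv: assumes "B \<in> Dset" shows "matrix_inv B = B"
proof -
  have sq: "B ** B = mat 1" using Dset_sq[OF assms] .
  let ?P = "\<lambda>A'. B ** A' = mat 1 \<and> A' ** B = mat 1"
  have "?P (matrix_inv B)" unfolding matrix_inv_def by (rule someI[of ?P B]) (use sq in simp)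
  then have "matrix_inv B = matrix_inv B ** (B ** B)" using sq by simp
  also have "\<dots> = B" using \<open>?P (matrix_inv B)\<close> by (simp add: matrix_mul_assoc)
  finally show ?thesis .
qed

lemma gm_sub: "gen_mats {- mat 1, Amat} \<subseteq> Dset"
proof
  fix B assume "B \<in> gen_mats {- mat 1, Amat}"
  then show "B \<in> Dset"
  proof (induction rule: gen_mats.induct)
    case genm_id then show ?case by (simp add: Dset_def mat_def)
  next
    case (genm_base B) then show ?case by (auto simp: Dset_def mat_def)
  next
    case (genm_mult B C) then show ?case by (auto simp: Dset_def)
  next
    case (genm_inv B) then show ?case by (simp add: Dset_inv)
  qed
qed

lemma gm_sup: "Dset \<subseteq> gen_mats {- mat 1, Amat}"
proof
  fix B assume B: "B \<in> Dset"
  have m1: "- mat 1 \<in> gen_mats {- mat 1, Amat}" by (rule genm_base) simp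
  have mA: "Amat \<in> gen_mats {- mat 1, Amat}" by (rule genm_base) simp
  have m3: "(- mat 1) ** Amat \<in> gen_mats {- mat 1, Amat}" by (rule genm_mult[OF m1 mA])
  consider "B = mat 1" | "B = - mat 1" | "B = Amat" | "B = (- mat 1) ** Amat"
    using B unfolding Dset_def by (auto simp: mat_eq2 mat_def)
  then show "B \<in> gen_mats {- mat 1, Amat}"
    by cases (use m1 mA m3 genm_id in auto)
qed

lemma conj_M:
  assumes p: "p = 1 \<or> p = -1" and q: "q = 1 \<or> q = -1" and d: "2 * d \<in> \<int>" and f: "f \<in> Mset"
  shows "dg p q c d \<circ> f \<circ> inv (dg p q c d) \<in> Mset"
proof -
  obtain s m n where fs: "f = dg 1 s m n" and s: "s = 1 \<or> s = -1" and mn: "m \<in> \<int>" "n \<in> \<int>"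
    using f unfolding Mset_def by blast
  have pp: "p * p = 1" "q * q = 1" "q * (q * s) = s" "d * (q * (q * s)) = d * s" using p q by auto
  have "dg p q c d \<circ> f \<circ> inv (dg p q c d) = dg 1 s (p * m) (d - s * d + q * n)"
    using p q by (elim disjE) (simp_all add: fs dg_inv dg_comp algebra_simps)
  moreover have "p * m \<in> \<int>" using p mn by auto
  moreover have "d - s * d + q * n \<in> \<int>"
  proof -
    have "d - s * d \<in> \<int>" using s d by (auto simp: algebra_simps mult_2)
    moreover have "q * n \<in> \<int>" using q mn by auto
    ultimately show ?thesis by simp
  qed
  ultimately show ?thesis using s unfolding Mset_def by blast
qed

lemma int_unit: assumes "(x::real) \<in> \<int>" "y \<in> \<int>" "x * y = 1" shows "x = 1 \<or> x = -1"
proof -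
  obtain i j where ij: "x = of_int i" "y = of_int j" using assms Ints_cases by metis
  then have "of_int (i * j) = (1::real)" using assms by simp
  then have "i * j = 1" by linarith
  then have "i = 1 \<or> i = -1" using zmult_eq_1_iff by blast
  then show ?thesis using ij by auto
qed

definition pt :: "real \<Rightarrow> real \<Rightarrow> real^2" where "pt x y = (\<chi> i. if i = 1 then x else y)"
lemma pt_simps [simp]: "pt x y $ 1 = x" "pt x y $ 2 = y" by (simp_all add: pt_def)

lemma norm_sup: "{aff b B | b B. 2 * b $ 2 \<in> \<int> \<and> B \<in> gen_mats {- mat 1, Amat}} \<subseteq> affine_normalizer Mgrp"
proof
  fix g assume "g \<in> {aff b B | b B. 2 * b $ 2 \<in> \<int> \<and> B \<in> gen_mats {- mat 1, Amat}}"
  then obtain b B where g: "g = aff b B" and b: "2 * b $ 2 \<in> \<int>" and B: "B \<in> Dset"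
    using gm_sub by blast
  define p where "p = B$1$1"
  define q where "q = B$2$2"
  have pq: "p = 1 \<or> p = -1" "q = 1 \<or> q = -1" using B unfolding Dset_def p_def q_def by auto
  have gd: "g = dg p q (b$1) (b$2)" using B g aff_diag unfolding Dset_def p_def q_def by auto
  have "invertible B" unfolding invertible_def using Dset_sq[OF B] by blast
  then have "g \<in> Aff2" unfolding Aff2_def g by blast
  moreover have "(\<lambda>m. g \<circ> m \<circ> inv g) ` Mgrp = Mgrp"
  proof -
    define h where "h = dg p q (-p * b$1) (-q * b$2)"
    have ih: "inv g = h" unfolding h_def gd using pq by (simp add: dg_inv)
    have hg: "inv h = g" unfolding h_def gd using pq by (elim disjE) (simp_all add: dg_inv)
    have gh: "g \<circ> h = id" "h \<circ> g = id" unfolding h_def gd using pq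
      by (elim disjE, simp_all add: dg_comp dg_id[symmetric])+
    have b2: "2 * (-q * b$2) \<in> \<int>" using pq b by (auto simp: algebra_simps)
    have "(\<lambda>m. g \<circ> m \<circ> h) ` Mset = Mset"
    proof
      show "(\<lambda>m. g \<circ> m \<circ> h) ` Mset \<subseteq> Mset"
        using conj_M[OF pq b] ih gd by auto
      show "Mset \<subseteq> (\<lambda>m. g \<circ> m \<circ> h) ` Mset"
      proof
        fix f assume f: "f \<in> Mset"
        have "h \<circ> f \<circ> g \<in> Mset" using conj_M[OF pq b2 f, of "-p * b$1"] hg h_def by simp
        moreover have "f = g \<circ> (h \<circ> f \<circ> g) \<circ> h"
          using gh by (simp add: fun_eq_iff comp_def)
        ultimately show "f \<in> (\<lambda>m. g \<circ> m \<circ> h) ` Mset" by blast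
      qed
    qed
    then show ?thesis using ih Mgrp_eq by simp
  qed
  ultimately show "g \<in> affine_normalizer Mgrp" unfolding affine_normalizer_def by blast
qed

lemma norm_sub: "affine_normalizer Mgrp \<subseteq> {aff b B | b B. 2 * b $ 2 \<in> \<int> \<and> B \<in> gen_mats {- mat 1, Amat}}"
proof
  fix g assume "g \<in> affine_normalizer Mgrp"
  then have gA: "g \<in> Aff2" and im: "(\<lambda>m. g \<circ> m \<circ> inv g) ` Mset = Mset"
    unfolding affine_normalizer_def Mgrp_eq by auto
  obtain b B where g: "g = aff b B" and iB: "invertible B" using gA unfolding Aff2_def by blast
  obtain Bi where Bi: "B ** Bi = mat 1" "Bi ** B = mat 1" using iB unfolding invertible_def by blast
  define h where "h = (\<lambda>y. Bi *v (y - b))"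
  have "g (h y) = y" for y
    unfolding g h_def aff_def by (simp add: matrix_vector_mul_assoc Bi)
  moreover have "h (g z) = z" for z
    unfolding g h_def aff_def by (simp add: matrix_vector_mul_assoc Bi)
  ultimately have gh: "g \<circ> h = id" "h \<circ> g = id" by (auto simp: fun_eq_iff)
  have ih: "inv g = h" by (rule inv_unique_comp[OF gh])
  have hgz: "h (g z) = z" for z using gh by (simp add: fun_eq_iff)
  have F: "\<exists>s m n. (s = 1 \<or> s = -1) \<and> m \<in> \<int> \<and> n \<in> \<int> \<and> (\<forall>z. g (f z) = dg 1 s m n (g z))"
    if "f \<in> Mset" for f
  proof -
    have "g \<circ> f \<circ> h \<in> Mset" using im that ih by blast
    then obtain s m n where "g \<circ> f \<circ> h = dg 1 s m n" "(s = 1 \<or> s = -1) \<and> m \<in> \<int> \<and> n \<in> \<int>"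
      unfolding Mset_def by blast
    moreover have "g (f z) = (g \<circ> f \<circ> h) (g z)" for z by (simp add: hgz)
    ultimately show ?thesis by (metis (no_types, lifting))
  qed
  have S: "\<exists>s m n. (s = 1 \<or> s = -1) \<and> m \<in> \<int> \<and> n \<in> \<int> \<and> (\<forall>z. f (g z) = g (dg 1 s m n z))"
    if "f \<in> Mset" for f
  proof -
    have "f \<in> (\<lambda>m. g \<circ> m \<circ> h) ` Mset" using im that ih by simp
    then obtain f' where "f' \<in> Mset" and ff: "f = g \<circ> f' \<circ> h" by (rule imageE)
    then obtain s m n where "f' = dg 1 s m n" and c: "(s = 1 \<or> s = -1) \<and> m \<in> \<int> \<and> n \<in> \<int>"
      unfolding Mset_def by blast
    then have "\<forall>z. f (g z) = g (dg 1 s m n z)" using ff hgz by simp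
    then show ?thesis using c by blast
  qed
  have T1: "dg 1 1 1 0 \<in> Mset" unfolding Mset_def by force
  have T2: "dg 1 1 0 1 \<in> Mset" unfolding Mset_def by force
  have TA: "dg 1 (-1) 0 0 \<in> Mset" unfolding Mset_def by force
  have a11: "B$1$1 \<in> \<int>"
  proof -
    obtain s m n where "m \<in> \<int>" "\<forall>z. g (dg 1 1 1 0 z) = dg 1 s m n (g z)" using F[OF T1] by blast
    then have "g (dg 1 1 1 0 0) $ 1 = dg 1 s m n (g 0) $ 1" by simp
    then have "B$1$1 = m" unfolding g by simp
    then show ?thesis using \<open>m \<in> \<int>\<close> by simp
  qed
  obtain s m n where smn: "s = 1 \<or> s = -1" "m \<in> \<int>" "n \<in> \<int>"
    and A: "\<forall>z. g (dg 1 (-1) 0 0 z) = dg 1 s m n (g z)" using F[OF TA] by blast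
  have A1: "g (dg 1 (-1) 0 0 z) $ 1 = dg 1 s m n (g z) $ 1" for z using A by simp
  have A2: "g (dg 1 (-1) 0 0 z) $ 2 = dg 1 s m n (g z) $ 2" for z using A by simp
  have a12: "B$1$2 = 0" using A1[of 0] A1[of "pt 0 1"] unfolding g by simp
  have a22: "B$2$2 \<noteq> 0"
  proof
    assume "B$2$2 = 0"
    then have "B *v pt 0 1 = 0" using a12
      by (simp add: vec_eq_iff forall_2 matrix_vector_mult_def sum_2)
    then have "Bi *v (B *v pt 0 1) = 0" by simp
    then have "pt 0 1 = 0" using Bi by (simp add: matrix_vector_mul_assoc)
    then show False by (metis pt_simps(2) zero_index zero_neq_one)
  qed
  have s: "s = -1"
  proof (rule ccontr)
    assume "s \<noteq> -1" then have "s = 1" using smn by simp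
    then show False using A2[of 0] A2[of "pt 0 1"] a22 unfolding g by simp
  qed
  have b2: "2 * b$2 \<in> \<int>"
  proof -
    have "b$2 = s * b$2 + n" using A2[of 0] unfolding g by simp
    then have "2 * b$2 = n" using s by simp
    then show ?thesis using smn by simp
  qed
  have a21: "B$2$1 = 0" using A2[of 0] A2[of "pt 1 0"] s unfolding g by simp
  have a22i: "B$2$2 \<in> \<int>"
  proof -
    obtain s m n where "n \<in> \<int>" "s = 1 \<or> s = -1" "\<forall>z. g (dg 1 1 0 1 z) = dg 1 s m n (g z)" using F[OF T2] by blast
    then have e: "g (dg 1 1 0 1 z) $ 2 = dg 1 s m n (g z) $ 2" for z by simp
    have "s = 1" using e[of 0] e[of "pt 0 1"] a22 \<open>s = 1 \<or> s = -1\<close> unfolding g by auto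
    then have "B$2$2 = n" using e[of 0] unfolding g by simp
    then show ?thesis using \<open>n \<in> \<int>\<close> by simp
  qed
  have p: "B$1$1 = 1 \<or> B$1$1 = -1"
  proof -
    obtain s m n where "m \<in> \<int>" "\<forall>z. dg 1 1 1 0 (g z) = g (dg 1 s m n z)" using S[OF T1] by blast
    then have "dg 1 1 1 0 (g 0) $ 1 = g (dg 1 s m n 0) $ 1" by simp
    then have "B$1$1 * m = 1" unfolding g using a12 by simp
    then show ?thesis using int_unit a11 \<open>m \<in> \<int>\<close> by blast
  qed
  have q: "B$2$2 = 1 \<or> B$2$2 = -1"
  proof -
    obtain s m n where "n \<in> \<int>" "\<forall>z. dg 1 1 0 1 (g z) = g (dg 1 s m n z)" using S[OF T2] by blast
    then have "dg 1 1 0 1 (g 0) $ 2 = g (dg 1 s m n 0) $ 2" by simp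
    then have "B$2$2 * n = 1" unfolding g using a21 by simp
    then show ?thesis using int_unit a22i \<open>n \<in> \<int>\<close> by blast
  qed
  have "B \<in> gen_mats {- mat 1, Amat}" using gm_sup p q a12 a21 unfolding Dset_def by blast
  then show "g \<in> {aff b B | b B. 2 * b $ 2 \<in> \<int> \<and> B \<in> gen_mats {- mat 1, Amat}}"
    using g b2 by blast
qed

theorem lemma17:
  shows "affine_normalizer Mgrp =
    {aff b B | b B. 2 * b $ 2 \<in> \<int> \<and> B \<in> gen_mats {- mat 1, Amat}}"
  using norm_sub norm_sup by blast

end
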